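(* For all positive integers $m,n,p,q$, $$\theta(K_{m,n}\times K_{p,q})=\max\{\theta(K_{mp,nq}),\ \theta(K_{mq,np})\}.$$
   Context: The thickness $\theta(G)$ of a graph $G$ is the minimum number of planar subgraphs whose union is $G$. The Kronecker product $G\times H$ of graphs $G$ and $H$ is the graph with vertex set $V(G)\times V(H)$ in which $(g,h)$ and $(g',h')$ are adjacent if and only if $gg'\in E(G)$ and $hh'\in E(H)$. $K_{a,b}$ denotes the complete bipartite graph with parts of sizes $a$ and $b$. *)

theory Defs
  imports "HOL-Analysis.Analysis"
begin

text \<open>A finite simple graph is a pair (V, E) of a vertex set and a set of
  two-element vertex sets (edges).\<close>

type_synonym 'a graph = "'a set \<times> 'a set set"

definition planar :: "'a set \<Rightarrow> 'a set set \<Rightarrow> bool" where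
  "planar V E \<longleftrightarrow>
     (\<exists>(f :: 'a \<Rightarrow> complex) (g :: 'a set \<Rightarrow> real \<Rightarrow> complex).
        inj_on f V \<and>
        (\<forall>e\<in>E. arc (g e) \<and> {pathstart (g e), pathfinish (g e)} = f ` e \<and>
                  path_image (g e) \<inter> f ` V = f ` e) \<and>
        (\<forall>e\<in>E. \<forall>e'\<in>E. e \<noteq> e' \<longrightarrow> path_image (g e) \<inter> path_image (g e') \<subseteq> f ` (e \<inter> e')))"

definition thickness :: "'a graph \<Rightarrow> nat" where
  "thickness G = (LEAST k. \<exists>Es :: nat \<Rightarrow> 'a set set.
      (\<Union>i<k. Es i) = snd G \<and> (\<forall>i<k. Es i \<subseteq> snd G \<and> planar (fst G) (Es i)))"

definition Kbip :: "nat \<Rightarrow> nat \<Rightarrow> (bool \<times> nat) graph" where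
  "Kbip a b = ({(False, i) | i. i < a} \<union> {(True, j) | j. j < b},
               {{(False, i), (True, j)} | i j. i < a \<and> j < b})"

definition kron :: "'a graph \<Rightarrow> 'b graph \<Rightarrow> ('a \<times> 'b) graph" where
  "kron G H = (fst G \<times> fst H,
               {{(g, h), (g', h')} | g g' h h'. {g, g'} \<in> snd G \<and> {h, h'} \<in> snd H})"

end

theory Submission
  imports Defs
begin


lemma planar_restrict:
  assumes "planar V E" "V' \<subseteq> V" "E' \<subseteq> E" "\<And>e. e \<in> E' \<Longrightarrow> e \<subseteq> V'"
  shows "planar V' E'"
proof -
  obtain f :: "'a \<Rightarrow> complex" and g :: "'a set \<Rightarrow> real \<Rightarrow> complex" where f: "inj_on f V"
    and g: "\<forall>e\<in>E. arc (g e) \<and> {pathstart (g e), pathfinish (g e)} = f ` e \<and>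
                  path_image (g e) \<inter> f ` V = f ` e"
    and h: "\<forall>e\<in>E. \<forall>e'\<in>E. e \<noteq> e' \<longrightarrow> path_image (g e) \<inter> path_image (g e') \<subseteq> f ` (e \<inter> e')"
    using assms(1) unfolding planar_def by blast
  have "inj_on f V'" using f assms(2) inj_on_subset by blast
  moreover have "\<forall>e\<in>E'. arc (g e) \<and> {pathstart (g e), pathfinish (g e)} = f ` e \<and>
                  path_image (g e) \<inter> f ` V' = f ` e"
  proof
    fix e assume e: "e \<in> E'"
    then have "e \<in> E" using assms(3) by blast
    with g have a: "arc (g e) \<and> {pathstart (g e), pathfinish (g e)} = f ` e" and
      b: "path_image (g e) \<inter> f ` V = f ` e" by auto
    have "f ` V' \<subseteq> f ` V" using assms(2) by blast
    moreover have "f ` e \<subseteq> f ` V'" using assms(4)[OF e] by blast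
    ultimately have "path_image (g e) \<inter> f ` V' = f ` e" using b by blast
    with a show "arc (g e) \<and> {pathstart (g e), pathfinish (g e)} = f ` e \<and>
                  path_image (g e) \<inter> f ` V' = f ` e" by blast
  qed
  moreover have "\<forall>e\<in>E'. \<forall>e'\<in>E'. e \<noteq> e' \<longrightarrow> path_image (g e) \<inter> path_image (g e') \<subseteq> f ` (e \<inter> e')"
    using h assms(3) by blast
  ultimately show ?thesis unfolding planar_def by blast
qed

lemma planar_pullback:
  assumes "planar V E" "inj_on \<psi> W" "\<psi> ` W = V" "E = (`) \<psi> ` F" "\<And>e. e \<in> F \<Longrightarrow> e \<subseteq> W"
  shows "planar W F"
proof -
  obtain f :: "'a \<Rightarrow> complex" and g :: "'a set \<Rightarrow> real \<Rightarrow> complex" where f: "inj_on f V"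
    and g: "\<forall>e\<in>E. arc (g e) \<and> {pathstart (g e), pathfinish (g e)} = f ` e \<and>
                  path_image (g e) \<inter> f ` V = f ` e"
    and h: "\<forall>e\<in>E. \<forall>e'\<in>E. e \<noteq> e' \<longrightarrow> path_image (g e) \<inter> path_image (g e') \<subseteq> f ` (e \<inter> e')"
    using assms(1) unfolding planar_def by blast
  define f' where "f' = f \<circ> \<psi>"
  define g' where "g' = (\<lambda>e. g (\<psi> ` e))"
  have "inj_on f' W" unfolding f'_def using f assms(2,3) comp_inj_on by blast
  moreover have "\<forall>e\<in>F. arc (g' e) \<and> {pathstart (g' e), pathfinish (g' e)} = f' ` e \<and>
                  path_image (g' e) \<inter> f' ` W = f' ` e"
  proof
    fix e assume e: "e \<in> F"
    then have "\<psi> ` e \<in> E" using assms(4) by blast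
    have i1: "f' ` e = f ` (\<psi> ` e)" "f' ` W = f ` V"
      unfolding f'_def assms(3)[symmetric] by (simp_all add: image_comp)
    have ge: "arc (g (\<psi> ` e)) \<and> {pathstart (g (\<psi> ` e)), pathfinish (g (\<psi> ` e))} = f ` (\<psi> ` e) \<and>
                  path_image (g (\<psi> ` e)) \<inter> f ` V = f ` (\<psi> ` e)"
      using bspec[OF g \<open>\<psi> ` e \<in> E\<close>] .
    show "arc (g' e) \<and> {pathstart (g' e), pathfinish (g' e)} = f' ` e \<and>
                  path_image (g' e) \<inter> f' ` W = f' ` e"
      unfolding g'_def i1 by (rule ge)
  qed
  moreover have "\<forall>e\<in>F. \<forall>e'\<in>F. e \<noteq> e' \<longrightarrow> path_image (g' e) \<inter> path_image (g' e') \<subseteq> f' ` (e \<inter> e')"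
  proof (intro ballI impI)
    fix e e' assume e: "e \<in> F" "e' \<in> F" "e \<noteq> e'"
    have s: "e \<subseteq> W" "e' \<subseteq> W" using e assms(5) by auto
    have "\<psi> ` e \<noteq> \<psi> ` e'" using inj_on_image_eq_iff[OF assms(2) s] e(3) by blast
    moreover have "\<psi> ` e \<in> E" "\<psi> ` e' \<in> E" using e assms(4) by auto
    ultimately have "path_image (g' e) \<inter> path_image (g' e') \<subseteq> f ` (\<psi> ` e \<inter> \<psi> ` e')"
      using h unfolding g'_def by blast
    also have "\<psi> ` e \<inter> \<psi> ` e' = \<psi> ` (e \<inter> e')"
      using inj_on_image_Int[OF assms(2) s] by simp
    finally show "path_image (g' e) \<inter> path_image (g' e') \<subseteq> f' ` (e \<inter> e')"
      unfolding f'_def by (simp add: image_comp)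
  qed
  ultimately show ?thesis unfolding planar_def by blast
qed

lemma planar_pushforward:
  assumes "planar W F" "inj_on \<psi> W" "\<And>e. e \<in> F \<Longrightarrow> e \<subseteq> W"
  shows "planar (\<psi> ` W) ((`) \<psi> ` F)"
proof (rule planar_pullback[OF assms(1)])
  show "inj_on (inv_into W \<psi>) (\<psi> ` W)" by (rule inj_on_inv_into) simp
  show "inv_into W \<psi> ` \<psi> ` W = W" using assms(2) by simp
  show "F = (`) (inv_into W \<psi>) ` (`) \<psi> ` F"
  proof -
    have "\<And>e. e \<in> F \<Longrightarrow> inv_into W \<psi> ` \<psi> ` e = e"
      using assms(2,3) by (meson image_inv_into_cancel inv_into_image_cancel)
    then show ?thesis by (force simp: image_comp)
  qed
  show "\<And>e. e \<in> (`) \<psi> ` F \<Longrightarrow> e \<subseteq> \<psi> ` W" using assms(3) by blast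
qed



lemma planar_single:
  assumes "finite V" "x \<in> V" "y \<in> V" "x \<noteq> y"
  shows "planar V {{x, y}}"
proof -
  define h where "h = (\<lambda>v. real (to_nat_on V v))"
  have hi: "inj_on h V" unfolding h_def using inj_on_to_nat_on[of V] assms(1)
    by (simp add: countable_finite inj_on_def)
  define f where "f = (\<lambda>v. Complex (h v) ((h v)^2))"
  have fi: "inj_on f V" using hi unfolding f_def inj_on_def by (metis complex.inject)
  define g :: "'a set \<Rightarrow> real \<Rightarrow> complex" where "g = (\<lambda>e. linepath (f x) (f y))"
  have fxy: "f x \<noteq> f y" using fi assms inj_on_def by metis
  have seg: "closed_segment (f x) (f y) \<inter> f ` V = {f x, f y}"
  proof
    show "{f x, f y} \<subseteq> closed_segment (f x) (f y) \<inter> f ` V" using assms by auto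
    show "closed_segment (f x) (f y) \<inter> f ` V \<subseteq> {f x, f y}"
    proof
      fix z assume z: "z \<in> closed_segment (f x) (f y) \<inter> f ` V"
      then obtain w where w: "w \<in> V" "z = f w" by blast
      from z obtain u where u: "0 \<le> u" "u \<le> 1" "z = (1 - u) *\<^sub>R f x + u *\<^sub>R f y"
        using in_segment(1) by blast
      have re: "h w = (1-u) * h x + u * h y" using u(3) w(2) unfolding f_def
        by (metis Re_complex_of_real complex.sel(1) plus_complex.sel(1) scaleR_complex.sel(1))
      have im: "(h w)^2 = (1-u) * (h x)^2 + u * (h y)^2" using u(3) w(2) unfolding f_def
        by (metis complex.sel(2) plus_complex.sel(2) scaleR_complex.sel(2))
      have hxy: "h x \<noteq> h y" using hi assms inj_on_def by metis
      have re': "h w = h x + u * (h y - h x)" using re by (simp add: algebra_simps)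
      have "(h x + u * (h y - h x))^2 = (1-u) * (h x)^2 + u * (h y)^2" using im re' by simp
      then have "u * (1 - u) * (h x - h y)^2 = 0"
        by (simp add: power2_eq_square algebra_simps)
      then have "u = 0 \<or> u = 1" using hxy by auto
      then show "z \<in> {f x, f y}" using u by auto
    qed
  qed
  have "\<forall>e\<in>{{x,y}}. arc (g e) \<and> {pathstart (g e), pathfinish (g e)} = f ` e \<and>
                  path_image (g e) \<inter> f ` V = f ` e"
    using fxy seg by (simp add: g_def)
  moreover have "\<forall>e\<in>{{x,y}}. \<forall>e'\<in>{{x,y}}. e \<noteq> e' \<longrightarrow> path_image (g e) \<inter> path_image (g e') \<subseteq> f ` (e \<inter> e')"
    by simp
  ultimately show ?thesis unfolding planar_def
    apply - apply (rule exI[where x=f]) apply (rule exI[where x=g]) using fi by blast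
qed

lemma planar_empty:
  assumes "finite V"
  shows "planar V {}"
proof -
  have "inj_on (\<lambda>v. complex_of_real (real (to_nat_on V v))) V"
    using inj_on_to_nat_on[of V] assms(1) by (simp add: countable_finite inj_on_def)
  then show ?thesis unfolding planar_def
    apply - apply (rule exI[where x="\<lambda>v. complex_of_real (real (to_nat_on V v))"])
    apply (rule exI[where x="\<lambda>e t. 0"]) by simp
qed

lemma planar_union:
  assumes p1: "planar V1 E1" and p2: "planar V2 E2" and d: "V1 \<inter> V2 = {}"
    and fin: "finite V1" "finite V2" "finite E1" "finite E2"
    and s1: "\<And>e. e \<in> E1 \<Longrightarrow> e \<subseteq> V1 \<and> e \<noteq> {}"
    and s2: "\<And>e. e \<in> E2 \<Longrightarrow> e \<subseteq> V2 \<and> e \<noteq> {}"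
  shows "planar (V1 \<union> V2) (E1 \<union> E2)"
proof -
  obtain f1 :: "'a \<Rightarrow> complex" and g1 :: "'a set \<Rightarrow> real \<Rightarrow> complex" where f1: "inj_on f1 V1"
    and g1: "\<forall>e\<in>E1. arc (g1 e) \<and> {pathstart (g1 e), pathfinish (g1 e)} = f1 ` e \<and>
                  path_image (g1 e) \<inter> f1 ` V1 = f1 ` e"
    and h1: "\<forall>e\<in>E1. \<forall>e'\<in>E1. e \<noteq> e' \<longrightarrow> path_image (g1 e) \<inter> path_image (g1 e') \<subseteq> f1 ` (e \<inter> e')"
    using p1 unfolding planar_def by blast
  obtain f2 :: "'a \<Rightarrow> complex" and g2 :: "'a set \<Rightarrow> real \<Rightarrow> complex" where f2: "inj_on f2 V2"
    and g2: "\<forall>e\<in>E2. arc (g2 e) \<and> {pathstart (g2 e), pathfinish (g2 e)} = f2 ` e \<and>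
                  path_image (g2 e) \<inter> f2 ` V2 = f2 ` e"
    and h2: "\<forall>e\<in>E2. \<forall>e'\<in>E2. e \<noteq> e' \<longrightarrow> path_image (g2 e) \<inter> path_image (g2 e') \<subseteq> f2 ` (e \<inter> e')"
    using p2 unfolding planar_def by blast
  define S1 where "S1 = f1 ` V1 \<union> (\<Union>e\<in>E1. path_image (g1 e))"
  define S2 where "S2 = f2 ` V2 \<union> (\<Union>e\<in>E2. path_image (g2 e))"
  have "compact S1" unfolding S1_def
    apply (rule compact_Un) apply (rule finite_imp_compact) using fin apply simp
    apply (rule compact_UN) using fin g1 by (auto intro: compact_arc_image)
  then obtain B1 where B1: "\<And>z. z \<in> S1 \<Longrightarrow> norm z \<le> B1"
    using compact_imp_bounded bounded_iff by metis
  have "compact S2" unfolding S2_def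
    apply (rule compact_Un) apply (rule finite_imp_compact) using fin apply simp
    apply (rule compact_UN) using fin g2 by (auto intro: compact_arc_image)
  then obtain B2 where B2: "\<And>z. z \<in> S2 \<Longrightarrow> norm z \<le> B2"
    using compact_imp_bounded bounded_iff by metis
  define c :: complex where "c = of_real (\<bar>B1\<bar> + \<bar>B2\<bar> + 1)"
  have sep: "z1 \<noteq> c + z2" if "z1 \<in> S1" "z2 \<in> S2" for z1 z2
  proof
    assume eq: "z1 = c + z2"
    have "norm c \<le> norm (c + z2) + norm z2" by (metis add_diff_cancel_right' norm_triangle_ineq4)
    also have "\<dots> \<le> B1 + B2" using B1[OF that(1)] B2[OF that(2)] eq by simp
    finally have "norm c \<le> B1 + B2" .
    moreover have "norm c = \<bar>\<bar>B1\<bar> + \<bar>B2\<bar> + 1\<bar>" unfolding c_def by (rule norm_of_real)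
    ultimately show False by linarith
  qed
  have injc: "inj ((+) c)" by (simp add: inj_def)
  have E12: "E1 \<inter> E2 = {}" using s1 s2 d by blast
  define f where "f = (\<lambda>v. if v \<in> V1 then f1 v else c + f2 v)"
  define g where "g = (\<lambda>e. if e \<in> E1 then g1 e else (\<lambda>x. c + x) \<circ> g2 e)"
  have fV1: "f ` V1 = f1 ` V1" unfolding f_def by auto
  have fV2: "f ` V2 = (+) c ` f2 ` V2" unfolding f_def using d by (auto simp: image_image)
  have fe1: "f ` e = f1 ` e" if "e \<in> E1" for e using s1[OF that] unfolding f_def by auto
  have fe2: "f ` e = (+) c ` f2 ` e" if "e \<in> E2" for e using s2[OF that] d unfolding f_def
    by (auto simp: image_image)
  have ge2: "g e = (\<lambda>x. c + x) \<circ> g2 e" if "e \<in> E2" for e using that E12 unfolding g_def by auto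
  have inj: "inj_on f (V1 \<union> V2)"
  proof -
    have "inj_on f V1" using f1 unfolding f_def inj_on_def by auto
    moreover have "inj_on f V2" using f2 d unfolding f_def inj_on_def by auto
    moreover have "f ` (V1 - V2) \<inter> f ` (V2 - V1) = {}"
    proof -
      have "f ` V1 \<inter> f ` V2 = {}" unfolding fV1 fV2 using sep unfolding S1_def S2_def by blast
      then show ?thesis by blast
    qed
    ultimately show ?thesis using inj_on_Un by blast
  qed
  have P1: "path_image (g1 e) \<subseteq> S1" if "e \<in> E1" for e using that unfolding S1_def by blast
  have P2: "path_image (g2 e) \<subseteq> S2" if "e \<in> E2" for e using that unfolding S2_def by blast
  have Q1: "f1 ` V1 \<subseteq> S1" unfolding S1_def by blast
  have Q2: "f2 ` V2 \<subseteq> S2" unfolding S2_def by blast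
  have A: "\<forall>e\<in>E1 \<union> E2. arc (g e) \<and> {pathstart (g e), pathfinish (g e)} = f ` e \<and>
                  path_image (g e) \<inter> f ` (V1 \<union> V2) = f ` e"
  proof
    fix e assume "e \<in> E1 \<union> E2"
    then consider "e \<in> E1" | "e \<in> E2" by blast
    then show "arc (g e) \<and> {pathstart (g e), pathfinish (g e)} = f ` e \<and>
                  path_image (g e) \<inter> f ` (V1 \<union> V2) = f ` e"
    proof cases
      case 1
      have "path_image (g1 e) \<inter> f ` V2 = {}" unfolding fV2 using sep P1[OF 1] Q2 by blast
      moreover have ge: "g e = g1 e" using 1 unfolding g_def by simp
      moreover have "arc (g1 e) \<and> {pathstart (g1 e), pathfinish (g1 e)} = f1 ` e \<and>
                  path_image (g1 e) \<inter> f1 ` V1 = f1 ` e" using g1 1 by blast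
      ultimately show ?thesis using fe1[OF 1] fV1 by (simp add: image_Un Int_Un_distrib)
    next
      case 2
      have "(+) c ` path_image (g2 e) \<inter> f ` V1 = {}" unfolding fV1 using sep P2[OF 2] Q1 by blast
      moreover have "(+) c ` path_image (g2 e) \<inter> (+) c ` f2 ` V2 = (+) c ` f2 ` e"
        using g2 2 by (metis image_Int injc)
      moreover have g2e: "arc (g2 e) \<and> {pathstart (g2 e), pathfinish (g2 e)} = f2 ` e \<and>
                  path_image (g2 e) \<inter> f2 ` V2 = f2 ` e" using g2 2 by blast
      moreover have "arc (g e)" using g2e ge2[OF 2] arc_translation_eq[of c "g2 e"] by simp
      moreover have "{pathstart (g e), pathfinish (g e)} = (+) c ` {pathstart (g2 e), pathfinish (g2 e)}"
        using ge2[OF 2] pathstart_translation[of c "g2 e"] pathfinish_translation[of c "g2 e"] by simp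
      moreover have "path_image (g e) = (+) c ` path_image (g2 e)"
        using ge2[OF 2] path_image_translation[of c "g2 e"] by simp
      ultimately show ?thesis using fe2[OF 2] fV2 by (simp add: image_Un Int_Un_distrib)
    qed
  qed
  have B: "\<forall>e\<in>E1 \<union> E2. \<forall>e'\<in>E1 \<union> E2. e \<noteq> e' \<longrightarrow> path_image (g e) \<inter> path_image (g e') \<subseteq> f ` (e \<inter> e')"
  proof (intro ballI impI)
    fix e e' assume e: "e \<in> E1 \<union> E2" "e' \<in> E1 \<union> E2" "e \<noteq> e'"
    consider "e \<in> E1" "e' \<in> E1" | "e \<in> E1" "e' \<in> E2" | "e \<in> E2" "e' \<in> E1" | "e \<in> E2" "e' \<in> E2"
      using e by blast
    then show "path_image (g e) \<inter> path_image (g e') \<subseteq> f ` (e \<inter> e')"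
    proof cases
      case 1
      have "f ` (e \<inter> e') = f1 ` (e \<inter> e')" using s1 1 unfolding f_def by auto
      then show ?thesis using h1 1 e unfolding g_def by auto
    next
      case 2
      have a: "path_image (g e) = path_image (g1 e)" using 2 unfolding g_def by simp
      have b: "path_image (g e') = (+) c ` path_image (g2 e')"
        using ge2[OF 2(2)] path_image_translation[of c "g2 e'"] by simp
      have "path_image (g e) \<inter> path_image (g e') = {}"
        unfolding a b using sep P1[OF 2(1)] P2[OF 2(2)] by blast
      then show ?thesis by simp
    next
      case 3
      have a: "path_image (g e') = path_image (g1 e')" using 3 unfolding g_def by simp
      have b: "path_image (g e) = (+) c ` path_image (g2 e)"
        using ge2[OF 3(1)] path_image_translation[of c "g2 e"] by simp
      have "path_image (g e) \<inter> path_image (g e') = {}"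
        unfolding a b using sep P1[OF 3(2)] P2[OF 3(1)] by blast
      then show ?thesis by simp
    next
      case 4
      have sub: "e \<inter> e' \<subseteq> V2" using s2 4 by blast
      have "f ` (e \<inter> e') = (\<lambda>v. c + f2 v) ` (e \<inter> e')"
        by (rule image_cong) (use sub d in \<open>auto simp: f_def\<close>)
      then have fe: "f ` (e \<inter> e') = (+) c ` f2 ` (e \<inter> e')" by (simp add: image_image)
      have "path_image (g e) \<inter> path_image (g e') = (+) c ` (path_image (g2 e) \<inter> path_image (g2 e'))"
        using ge2 4 by (simp add: path_image_translation image_Int injc)
      also have "\<dots> \<subseteq> (+) c ` f2 ` (e \<inter> e')" using h2 4 e by blast
      finally show ?thesis using fe by simp
    qed
  qed
  show ?thesis unfolding planar_def
    apply - apply (rule exI[where x=f]) apply (rule exI[where x=g]) using inj A B by blast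
qed

definition works :: "'a graph \<Rightarrow> nat \<Rightarrow> bool" where
  "works G k \<longleftrightarrow> (\<exists>Es :: nat \<Rightarrow> 'a set set.
      (\<Union>i<k. Es i) = snd G \<and> (\<forall>i<k. Es i \<subseteq> snd G \<and> planar (fst G) (Es i)))"

lemma thickness_works: "thickness G = (LEAST k. works G k)"
  unfolding thickness_def works_def ..

lemma works_mono:
  assumes "works G k" "k \<le> k'" "finite (fst G)"
  shows "works G k'"
proof -
  obtain Es where E: "(\<Union>i<k. Es i) = snd G" "\<forall>i<k. Es i \<subseteq> snd G \<and> planar (fst G) (Es i)"
    using assms(1) unfolding works_def by blast
  define Es' where "Es' = (\<lambda>i. if i < k then Es i else {})"
  have "(\<Union>i<k'. Es' i) = (\<Union>i<k. Es i)"
  proof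
    show "(\<Union>i<k'. Es' i) \<subseteq> (\<Union>i<k. Es i)"
      unfolding Es'_def by (auto split: if_splits)
    show "(\<Union>i<k. Es i) \<subseteq> (\<Union>i<k'. Es' i)"
    proof
      fix x assume "x \<in> (\<Union>i<k. Es i)"
      then obtain i where "i < k" "x \<in> Es i" by blast
      then show "x \<in> (\<Union>i<k'. Es' i)" using assms(2) unfolding Es'_def
        by (intro UN_I[of i]) auto
    qed
  qed
  moreover have "\<forall>i<k'. Es' i \<subseteq> snd G \<and> planar (fst G) (Es' i)"
    using E(2) planar_empty[OF assms(3)] unfolding Es'_def by auto
  ultimately show ?thesis unfolding works_def using E(1) by (intro exI[of _ Es']) simp
qed

lemma works_exists:
  assumes "finite (fst G)" "finite (snd G)"
    "\<And>e. e \<in> snd G \<Longrightarrow> \<exists>x y. x \<in> fst G \<and> y \<in> fst G \<and> x \<noteq> y \<and> e = {x, y}"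
  shows "works G (card (snd G))"
proof -
  obtain h where h: "bij_betw h {0..<card (snd G)} (snd G)"
    using ex_bij_betw_nat_finite[OF assms(2)] by blast
  define Es where "Es = (\<lambda>i. {h i})"
  have "(\<Union>i<card (snd G). Es i) = h ` {..<card (snd G)}" unfolding Es_def by (simp add: UNION_singleton_eq_range)
  also have "\<dots> = snd G" using h by (simp add: bij_betw_def atLeast0LessThan)
  finally have 1: "(\<Union>i<card (snd G). Es i) = snd G" .
  have "\<forall>i<card (snd G). Es i \<subseteq> snd G \<and> planar (fst G) (Es i)"
  proof (intro allI impI)
    fix i assume i: "i < card (snd G)"
    then have hi: "h i \<in> snd G" using h by (simp add: bij_betw_def atLeast0LessThan image_iff) blast
    then obtain x y where "x \<in> fst G" "y \<in> fst G" "x \<noteq> y" "h i = {x, y}" using assms(3) by blast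
    then show "Es i \<subseteq> snd G \<and> planar (fst G) (Es i)"
      using hi planar_single[OF assms(1)] unfolding Es_def by auto
  qed
  with 1 show ?thesis unfolding works_def by (intro exI[of _ Es]) simp
qed

lemma least_works:
  assumes "works G k" "\<And>k k'. works G k \<Longrightarrow> k \<le> k' \<Longrightarrow> works G k'"
  shows "works G (LEAST k. works G k)"
  using assms(1) by (rule LeastI)

lemma split_works:
  fixes \<psi>1 :: "'b \<Rightarrow> 'a" and \<psi>2 :: "'b \<Rightarrow> 'a"
  assumes fin: "finite W1" "finite W2" "finite F1" "finite F2"
    and s1: "\<And>e. e \<in> F1 \<Longrightarrow> e \<subseteq> W1 \<and> e \<noteq> {}"
    and s2: "\<And>e. e \<in> F2 \<Longrightarrow> e \<subseteq> W2 \<and> e \<noteq> {}"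
    and i1: "inj_on \<psi>1 W1" and i2: "inj_on \<psi>2 W2"
    and V: "V = \<psi>1 ` W1 \<union> \<psi>2 ` W2" and d: "\<psi>1 ` W1 \<inter> \<psi>2 ` W2 = {}"
    and E: "E = (`) \<psi>1 ` F1 \<union> (`) \<psi>2 ` F2"
  shows "works (V, E) k \<longleftrightarrow> works (W1, F1) k \<and> works (W2, F2) k"
proof
  have one: "works (W, F) k" if
    fin': "finite W" and s: "\<And>e. e \<in> F \<Longrightarrow> e \<subseteq> W \<and> e \<noteq> {}" and i: "inj_on \<psi> W"
    and sub: "(`) \<psi> ` F \<subseteq> E" and subV: "\<psi> ` W \<subseteq> V" and w: "works (V, E) k"
    for W F and \<psi> :: "'b \<Rightarrow> 'a"
  proof -
    obtain Es where Es: "(\<Union>i<k. Es i) = E" "\<forall>i<k. Es i \<subseteq> E \<and> planar V (Es i)"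
      using w unfolding works_def fst_conv snd_conv by blast
    define Fs where "Fs = (\<lambda>i. {f \<in> F. \<psi> ` f \<in> Es i})"
    have "(\<Union>i<k. Fs i) = F" unfolding Fs_def using Es(1) sub by blast
    moreover have "\<forall>i<k. Fs i \<subseteq> F \<and> planar W (Fs i)"
    proof (intro allI impI conjI)
      fix i assume ik: "i < k"
      show "Fs i \<subseteq> F" unfolding Fs_def by blast
      have "planar (\<psi> ` W) ((`) \<psi> ` Fs i)"
        apply (rule planar_restrict[of V "Es i"])
        using Es(2) ik subV s unfolding Fs_def by (auto, blast)
      then show "planar W (Fs i)"
        apply (rule planar_pullback[of _ _ \<psi>])
        using i s unfolding Fs_def by auto
    qed
    ultimately show ?thesis unfolding works_def fst_conv snd_conv
      by (intro exI[of _ Fs]) simp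
  qed
  assume w: "works (V, E) k"
  show "works (W1, F1) k \<and> works (W2, F2) k"
  proof
    show "works (W1, F1) k" by (rule one[OF fin(1) s1 i1 _ _ w]) (use E V in auto)
    show "works (W2, F2) k" by (rule one[OF fin(2) s2 i2 _ _ w]) (use E V in auto)
  qed
next
  assume "works (W1, F1) k \<and> works (W2, F2) k"
  then obtain Fs1 Fs2 where
    A: "(\<Union>i<k. Fs1 i) = F1" "\<forall>i<k. Fs1 i \<subseteq> F1 \<and> planar W1 (Fs1 i)" and
    B: "(\<Union>i<k. Fs2 i) = F2" "\<forall>i<k. Fs2 i \<subseteq> F2 \<and> planar W2 (Fs2 i)"
    unfolding works_def fst_conv snd_conv by blast
  define Es where "Es = (\<lambda>i. (`) \<psi>1 ` Fs1 i \<union> (`) \<psi>2 ` Fs2 i)"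
  have "(\<Union>i<k. Es i) = (`) \<psi>1 ` (\<Union>i<k. Fs1 i) \<union> (`) \<psi>2 ` (\<Union>i<k. Fs2 i)"
    unfolding Es_def by (simp add: image_UN UN_Un_distrib)
  then have 1: "(\<Union>i<k. Es i) = E" using A(1) B(1) E by simp
  have "\<forall>i<k. Es i \<subseteq> E \<and> planar V (Es i)"
  proof (intro allI impI conjI)
    fix i assume ik: "i < k"
    show "Es i \<subseteq> E" unfolding Es_def E using A(2) B(2) ik by (intro Un_mono image_mono) auto
    have p1: "planar (\<psi>1 ` W1) ((`) \<psi>1 ` Fs1 i)"
      by (rule planar_pushforward) (use A(2) ik i1 s1 in auto)
    have p2: "planar (\<psi>2 ` W2) ((`) \<psi>2 ` Fs2 i)"
      by (rule planar_pushforward) (use B(2) ik i2 s2 in auto)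
    have f1: "finite (Fs1 i)" using A(2) ik fin(3) finite_subset by blast
    have f2: "finite (Fs2 i)" using B(2) ik fin(4) finite_subset by blast
    have e1: "\<And>e. e \<in> (`) \<psi>1 ` Fs1 i \<Longrightarrow> e \<subseteq> \<psi>1 ` W1 \<and> e \<noteq> {}"
    proof -
      fix e assume "e \<in> (`) \<psi>1 ` Fs1 i"
      then obtain e0 where "e0 \<in> F1" "e = \<psi>1 ` e0" using A(2) ik by blast
      then show "e \<subseteq> \<psi>1 ` W1 \<and> e \<noteq> {}" using s1[of e0] by auto
    qed
    have e2: "\<And>e. e \<in> (`) \<psi>2 ` Fs2 i \<Longrightarrow> e \<subseteq> \<psi>2 ` W2 \<and> e \<noteq> {}"
    proof -
      fix e assume "e \<in> (`) \<psi>2 ` Fs2 i"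
      then obtain e0 where "e0 \<in> F2" "e = \<psi>2 ` e0" using B(2) ik by blast
      then show "e \<subseteq> \<psi>2 ` W2 \<and> e \<noteq> {}" using s2[of e0] by auto
    qed
    show "planar V (Es i)" unfolding V Es_def
      by (rule planar_union[OF p1 p2 d]) (use fin f1 f2 e1 e2 in auto)
  qed
  with 1 show "works (V, E) k" unfolding works_def fst_conv snd_conv
    by (intro exI[of _ Es]) simp
qed

lemma split_thickness:
  fixes \<psi>1 :: "'b \<Rightarrow> 'a" and \<psi>2 :: "'b \<Rightarrow> 'a"
  assumes fin: "finite W1" "finite W2" "finite F1" "finite F2"
    and s1: "\<And>e. e \<in> F1 \<Longrightarrow> \<exists>x y. x \<in> W1 \<and> y \<in> W1 \<and> x \<noteq> y \<and> e = {x, y}"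
    and s2: "\<And>e. e \<in> F2 \<Longrightarrow> \<exists>x y. x \<in> W2 \<and> y \<in> W2 \<and> x \<noteq> y \<and> e = {x, y}"
    and i1: "inj_on \<psi>1 W1" and i2: "inj_on \<psi>2 W2"
    and V: "V = \<psi>1 ` W1 \<union> \<psi>2 ` W2" and d: "\<psi>1 ` W1 \<inter> \<psi>2 ` W2 = {}"
    and E: "E = (`) \<psi>1 ` F1 \<union> (`) \<psi>2 ` F2"
  shows "thickness (V, E) = max (thickness (W1, F1)) (thickness (W2, F2))"
proof -
  have s1': "e \<subseteq> W1 \<and> e \<noteq> {}" if ee: "e \<in> F1" for e
  proof -
    obtain x y where "x \<in> W1" "y \<in> W1" "e = {x, y}" using s1[OF ee] by blast
    then show ?thesis by simp
  qed
  have s2': "e \<subseteq> W2 \<and> e \<noteq> {}" if ee: "e \<in> F2" for e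
  proof -
    obtain x y where "x \<in> W2" "y \<in> W2" "e = {x, y}" using s2[OF ee] by blast
    then show ?thesis by simp
  qed
  note sw = split_works[OF fin s1' s2' i1 i2 V d E]
  define a where "a = (LEAST k. works (W1, F1) k)"
  define b where "b = (LEAST k. works (W2, F2) k)"
  have wa: "works (W1, F1) a" unfolding a_def
  proof (rule LeastI[of _ "card F1"])
    show "works (W1, F1) (card F1)"
      by (rule works_exists[of "(W1, F1)", unfolded fst_conv snd_conv]) (use fin s1 in blast)+
  qed
  have wb: "works (W2, F2) b" unfolding b_def
  proof (rule LeastI[of _ "card F2"])
    show "works (W2, F2) (card F2)"
      by (rule works_exists[of "(W2, F2)", unfolded fst_conv snd_conv]) (use fin s2 in blast)+
  qed
  have "works (W1, F1) (max a b)" by (rule works_mono[OF wa]) (simp_all add: fin)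
  moreover have "works (W2, F2) (max a b)" by (rule works_mono[OF wb]) (simp_all add: fin)
  ultimately have "works (V, E) (max a b)" using sw by blast
  moreover have "max a b \<le> k" if "works (V, E) k" for k
  proof -
    have "works (W1, F1) k" "works (W2, F2) k" using sw that by blast+
    then show ?thesis unfolding a_def b_def by (simp add: Least_le)
  qed
  ultimately have "(LEAST k. works (V, E) k) = max a b"
    by (rule Least_equality)
  then show ?thesis unfolding thickness_works a_def b_def by simp
qed



lemma ar1: "i < (m::nat) \<Longrightarrow> k < p \<Longrightarrow> i * p + k < m * p"
proof -
  assume a: "i < m" "k < p"
  have "i * p + k < i * p + p" using a by simp
  also have "\<dots> = Suc i * p" by simp
  also have "\<dots> \<le> m * p" using a by (intro mult_right_mono) auto
  finally show ?thesis .
qed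

lemma ar2: "x < (m::nat) * p \<Longrightarrow> x div p < m"
  by (simp add: less_mult_imp_div_less)

lemma ar3: "x < (m::nat) * p \<Longrightarrow> x mod p < p"
  by (metis mod_less_divisor mult_0_right not_less_zero zero_less_iff_neq_zero)

lemma ar4: "k < (p::nat) \<Longrightarrow> (i * p + k) div p = i \<and> (i * p + k) mod p = k"
  by simp

lemma Kbip_fst_fin: "finite (fst (Kbip a b))"
proof -
  have "fst (Kbip a b) = (Pair False) ` {..<a} \<union> (Pair True) ` {..<b}"
    unfolding Kbip_def by auto
  then show ?thesis by simp
qed

lemma Kbip_snd_eq: "snd (Kbip a b) = (\<lambda>(i, j). {(False, i), (True, j)}) ` ({..<a} \<times> {..<b})"
  unfolding Kbip_def by auto

lemma Kbip_snd_fin: "finite (snd (Kbip a b))"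
  unfolding Kbip_snd_eq by simp

lemma Kbip_edge: "e \<in> snd (Kbip a b) \<Longrightarrow> \<exists>x y. x \<in> fst (Kbip a b) \<and> y \<in> fst (Kbip a b) \<and> x \<noteq> y \<and> e = {x, y}"
  unfolding Kbip_def by auto

definition psi1 :: "nat \<Rightarrow> nat \<Rightarrow> bool \<times> nat \<Rightarrow> (bool \<times> nat) \<times> (bool \<times> nat)" where
  "psi1 p q = (\<lambda>(b, x). if b then ((True, x div q), (True, x mod q)) else ((False, x div p), (False, x mod p)))"
definition psi2 :: "nat \<Rightarrow> nat \<Rightarrow> bool \<times> nat \<Rightarrow> (bool \<times> nat) \<times> (bool \<times> nat)" where
  "psi2 p q = (\<lambda>(b, x). if b then ((True, x div p), (False, x mod p)) else ((False, x div q), (True, x mod q)))"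

lemma Kbip_edge_iff: "{g, g'} \<in> snd (Kbip a b) \<longleftrightarrow>
   (\<exists>i j. i < a \<and> j < b \<and> ((g = (False, i) \<and> g' = (True, j)) \<or> (g = (True, j) \<and> g' = (False, i))))"
  unfolding Kbip_def by (auto simp: doubleton_eq_iff)

lemma kron_snd_mem: "e \<in> snd (kron G H) \<longleftrightarrow> (\<exists>g g' h h'. e = {(g, h), (g', h')} \<and> {g, g'} \<in> snd G \<and> {h, h'} \<in> snd H)"
  unfolding kron_def by auto

lemma psi1_img: "(`) (psi1 p q) ` snd (Kbip a b) = (\<lambda>(x, y). {psi1 p q (False, x), psi1 p q (True, y)}) ` ({..<a} \<times> {..<b})"
  unfolding Kbip_snd_eq image_image by (simp add: case_prod_beta)
lemma psi2_img: "(`) (psi2 p q) ` snd (Kbip a b) = (\<lambda>(x, y). {psi2 p q (False, x), psi2 p q (True, y)}) ` ({..<a} \<times> {..<b})"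
  unfolding Kbip_snd_eq image_image by (simp add: case_prod_beta)

lemma kron_snd:
  assumes "p > 0" "q > 0"
  shows "snd (kron (Kbip m n) (Kbip p q)) =
    (`) (psi1 p q) ` snd (Kbip (m * p) (n * q)) \<union> (`) (psi2 p q) ` snd (Kbip (m * q) (n * p))"
proof
  show "snd (kron (Kbip m n) (Kbip p q)) \<subseteq>
    (`) (psi1 p q) ` snd (Kbip (m * p) (n * q)) \<union> (`) (psi2 p q) ` snd (Kbip (m * q) (n * p))"
  proof
    fix e assume "e \<in> snd (kron (Kbip m n) (Kbip p q))"
    then obtain g g' h h' where e: "e = {(g, h), (g', h')}" and
      G: "{g, g'} \<in> snd (Kbip m n)" and H: "{h, h'} \<in> snd (Kbip p q)"
      unfolding kron_snd_mem by blast
    from G obtain i j where ij: "i < m" "j < n" and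
      gg: "(g = (False, i) \<and> g' = (True, j)) \<or> (g = (True, j) \<and> g' = (False, i))"
      unfolding Kbip_edge_iff by blast
    from H obtain k l where kl: "k < p" "l < q" and
      hh: "(h = (False, k) \<and> h' = (True, l)) \<or> (h = (True, l) \<and> h' = (False, k))"
      unfolding Kbip_edge_iff by blast
    have m1: "i * p + k < m * p" "j * q + l < n * q" "i * q + l < m * q" "j * p + k < n * p"
      using ij kl by (simp_all add: ar1)
    have e1: "{((False, i), (False, k)), ((True, j), (True, l))} \<in> (`) (psi1 p q) ` snd (Kbip (m * p) (n * q))"
      unfolding psi1_img
      by (rule image_eqI[where x="(i * p + k, j * q + l)"]) (use m1 kl in \<open>simp_all add: psi1_def\<close>)
    have e2: "{((False, i), (True, l)), ((True, j), (False, k))} \<in> (`) (psi2 p q) ` snd (Kbip (m * q) (n * p))"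
      unfolding psi2_img
      by (rule image_eqI[where x="(i * q + l, j * p + k)"]) (use m1 kl in \<open>simp_all add: psi2_def\<close>)
    from gg hh e1 e2 show "e \<in> (`) (psi1 p q) ` snd (Kbip (m * p) (n * q)) \<union> (`) (psi2 p q) ` snd (Kbip (m * q) (n * p))"
      unfolding e by (auto simp: insert_commute)
  qed
  show "(`) (psi1 p q) ` snd (Kbip (m * p) (n * q)) \<union> (`) (psi2 p q) ` snd (Kbip (m * q) (n * p))
     \<subseteq> snd (kron (Kbip m n) (Kbip p q))"
  proof
    fix e assume "e \<in> (`) (psi1 p q) ` snd (Kbip (m * p) (n * q)) \<union> (`) (psi2 p q) ` snd (Kbip (m * q) (n * p))"
    then consider (a) x y where "x < m * p" "y < n * q" "e = {psi1 p q (False, x), psi1 p q (True, y)}"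
      | (b) x y where "x < m * q" "y < n * p" "e = {psi2 p q (False, x), psi2 p q (True, y)}"
      unfolding psi1_img psi2_img by auto
    then show "e \<in> snd (kron (Kbip m n) (Kbip p q))"
    proof cases
      case a
      have "{(False, x div p), (True, y div q)} \<in> snd (Kbip m n)"
        unfolding Kbip_edge_iff using a ar2[of x m p] ar2[of y n q] by blast
      moreover have "{(False, x mod p), (True, y mod q)} \<in> snd (Kbip p q)"
        unfolding Kbip_edge_iff using assms by auto
      ultimately show ?thesis unfolding kron_snd_mem using a(3)
        by (intro exI[of _ "(False, x div p)"] exI[of _ "(True, y div q)"]
            exI[of _ "(False, x mod p)"] exI[of _ "(True, y mod q)"]) (simp add: psi1_def)
    next
      case b
      have "{(False, x div q), (True, y div p)} \<in> snd (Kbip m n)"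
        unfolding Kbip_edge_iff using b ar2[of x m q] ar2[of y n p] by blast
      moreover have "{(True, x mod q), (False, y mod p)} \<in> snd (Kbip p q)"
        unfolding Kbip_edge_iff using assms by auto
      ultimately show ?thesis unfolding kron_snd_mem using b(3)
        by (intro exI[of _ "(False, x div q)"] exI[of _ "(True, y div p)"]
            exI[of _ "(True, x mod q)"] exI[of _ "(False, y mod p)"]) (simp add: psi2_def)
    qed
  qed
qed


lemma psi1_inj: "inj_on (psi1 p q) A"
  unfolding inj_on_def psi1_def by (auto split: if_splits) (metis div_mult_mod_eq)+

lemma psi2_inj: "inj_on (psi2 p q) A"
  unfolding inj_on_def psi2_def by (auto split: if_splits) (metis div_mult_mod_eq)+

lemma psi_disj: "psi1 p q ` A \<inter> psi2 p q ` B = {}"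
  unfolding psi1_def psi2_def by (auto split: if_splits)

lemma Kbip_fst_mem: "(b, x) \<in> fst (Kbip a c) \<longleftrightarrow> (if b then x < c else x < a)"
  unfolding Kbip_def by auto

lemma kron_fst:
  assumes "p > 0" "q > 0"
  shows "fst (kron (Kbip m n) (Kbip p q)) =
    psi1 p q ` fst (Kbip (m * p) (n * q)) \<union> psi2 p q ` fst (Kbip (m * q) (n * p))"
proof
  show "fst (kron (Kbip m n) (Kbip p q)) \<subseteq> psi1 p q ` fst (Kbip (m * p) (n * q)) \<union> psi2 p q ` fst (Kbip (m * q) (n * p))"
  proof
    fix v assume v: "v \<in> fst (kron (Kbip m n) (Kbip p q))"
    obtain b1 i b2 k where vv: "v = ((b1, i), (b2, k))" by (metis prod.collapse)
    have vi: "if b1 then i < n else i < m" and vk: "if b2 then k < q else k < p"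
      using v unfolding vv kron_def by (simp_all add: Kbip_fst_mem)
    show "v \<in> psi1 p q ` fst (Kbip (m * p) (n * q)) \<union> psi2 p q ` fst (Kbip (m * q) (n * p))"
    proof (cases b1; cases b2)
      assume "b1" "b2"
      then show ?thesis using vi vk unfolding vv
        by (intro UnI1 image_eqI[where x="(True, i * q + k)"]) (simp_all add: psi1_def Kbip_fst_mem ar1)
    next
      assume "b1" "\<not> b2"
      then show ?thesis using vi vk unfolding vv
        by (intro UnI2 image_eqI[where x="(True, i * p + k)"]) (simp_all add: psi2_def Kbip_fst_mem ar1)
    next
      assume "\<not> b1" "b2"
      then show ?thesis using vi vk unfolding vv
        by (intro UnI2 image_eqI[where x="(False, i * q + k)"]) (simp_all add: psi2_def Kbip_fst_mem ar1)
    next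
      assume "\<not> b1" "\<not> b2"
      then show ?thesis using vi vk unfolding vv
        by (intro UnI1 image_eqI[where x="(False, i * p + k)"]) (simp_all add: psi1_def Kbip_fst_mem ar1)
    qed
  qed
  show "psi1 p q ` fst (Kbip (m * p) (n * q)) \<union> psi2 p q ` fst (Kbip (m * q) (n * p)) \<subseteq> fst (kron (Kbip m n) (Kbip p q))"
  proof
    fix v assume "v \<in> psi1 p q ` fst (Kbip (m * p) (n * q)) \<union> psi2 p q ` fst (Kbip (m * q) (n * p))"
    then consider (a) b x where "(b, x) \<in> fst (Kbip (m * p) (n * q))" "v = psi1 p q (b, x)"
      | (c) b x where "(b, x) \<in> fst (Kbip (m * q) (n * p))" "v = psi2 p q (b, x)" by auto
    then show "v \<in> fst (kron (Kbip m n) (Kbip p q))"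
    proof cases
      case a then show ?thesis using assms ar2[of x m p] ar2[of x n q]
        by (cases b) (auto simp: kron_def psi1_def Kbip_fst_mem)
    next
      case c then show ?thesis using assms ar2[of x m q] ar2[of x n p]
        by (cases b) (auto simp: kron_def psi2_def Kbip_fst_mem)
    qed
  qed
qed


theorem theorem3p6:
  fixes m n p q :: nat
  assumes "m > 0" and "n > 0" and "p > 0" and "q > 0"
  shows "thickness (kron (Kbip m n) (Kbip p q))
           = max (thickness (Kbip (m * p) (n * q))) (thickness (Kbip (m * q) (n * p)))"
proof -
  have "thickness (fst (kron (Kbip m n) (Kbip p q)), snd (kron (Kbip m n) (Kbip p q)))
     = max (thickness (fst (Kbip (m * p) (n * q)), snd (Kbip (m * p) (n * q))))
           (thickness (fst (Kbip (m * q) (n * p)), snd (Kbip (m * q) (n * p))))"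
  proof (rule split_thickness[of _ _ _ _ "psi1 p q" "psi2 p q"])
    show "finite (fst (Kbip (m * p) (n * q)))" "finite (fst (Kbip (m * q) (n * p)))"
      by (rule Kbip_fst_fin)+
    show "finite (snd (Kbip (m * p) (n * q)))" "finite (snd (Kbip (m * q) (n * p)))"
      by (rule Kbip_snd_fin)+
    show "\<And>e. e \<in> snd (Kbip (m * p) (n * q)) \<Longrightarrow> \<exists>x y. x \<in> fst (Kbip (m * p) (n * q)) \<and> y \<in> fst (Kbip (m * p) (n * q)) \<and> x \<noteq> y \<and> e = {x, y}"
      by (rule Kbip_edge)
    show "\<And>e. e \<in> snd (Kbip (m * q) (n * p)) \<Longrightarrow> \<exists>x y. x \<in> fst (Kbip (m * q) (n * p)) \<and> y \<in> fst (Kbip (m * q) (n * p)) \<and> x \<noteq> y \<and> e = {x, y}"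
      by (rule Kbip_edge)
    show "inj_on (psi1 p q) (fst (Kbip (m * p) (n * q)))" by (rule psi1_inj)
    show "inj_on (psi2 p q) (fst (Kbip (m * q) (n * p)))" by (rule psi2_inj)
    show "fst (kron (Kbip m n) (Kbip p q)) = psi1 p q ` fst (Kbip (m * p) (n * q)) \<union> psi2 p q ` fst (Kbip (m * q) (n * p))"
      by (rule kron_fst) (use assms in auto)
    show "psi1 p q ` fst (Kbip (m * p) (n * q)) \<inter> psi2 p q ` fst (Kbip (m * q) (n * p)) = {}"
      by (rule psi_disj)
    show "snd (kron (Kbip m n) (Kbip p q)) = (`) (psi1 p q) ` snd (Kbip (m * p) (n * q)) \<union> (`) (psi2 p q) ` snd (Kbip (m * q) (n * p))"
      by (rule kron_snd) (use assms in auto)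
  qed
  then show ?thesis by simp
qed

end
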